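(* Let $R$ be a finite commutative local Frobenius ring with residue field $\mathbb{F}_q$. For $i=1,2$, let $C_i$ be a free linear code of length $n$ over $R$ with generator matrix $\mathrm{G}_i$ and parity check matrix $\mathrm{H}_i$, such that $C_1+C_2=R^n$. Then the following are equivalent: (1) $C_1$ and $C_2$ form an LCP; (2) $\begin{pmatrix}\mathrm{G}_1\\ \mathrm{G}_2\end{pmatrix}$ is invertible over $R$; (3) $\begin{pmatrix}\mathrm{H}_1\\ \mathrm{H}_2\end{pmatrix}$ is invertible over $R$; (4) $\texttt{Rank}_q(\mathrm{H}_2\mathrm{G}_1^\top)=\texttt{Rank}_q(\mathrm{G}_1)$ or $\texttt{Rank}_q(\mathrm{H}_1\mathrm{G}_2^\top)=\texttt{Rank}_q(\mathrm{G}_2)$.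
   Context: A linear code of length $n$ over $R$ is an $R$-submodule of $R^n$; free means free as an $R$-module. A pair $\{C_1,C_2\}$ is a linear complementary pair (LCP) if $C_1\cap C_2=\{\mathbf{0}\}$ and $C_1+C_2=R^n$. A generator matrix of a free code is a matrix whose rows form a basis of the code; a parity check matrix of $C$ is a generator matrix of $C^\perp$ with respect to the standard inner product $\sum_j u_jc_j$. For a matrix $\mathrm{A}$ over $R$, $\texttt{Rank}_q(\mathrm{A}):=\log_q|M|$ where $M$ is the $R$-submodule spanned by the rows of $\mathrm{A}$. *)

theory Defs
  imports Complex_Main "Jordan_Normal_Form.Matrix"
begin

section \<open>Ideals of a commutative ring (type-class idiom)\<close>

definition is_ideal :: "'a::comm_ring_1 set \<Rightarrow> bool" where
  "is_ideal I \<longleftrightarrow> 0 \<in> I \<and> (\<forall>x\<in>I. \<forall>y\<in>I. x + y \<in> I) \<and> (\<forall>r. \<forall>x\<in>I. r * x \<in> I)"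

definition maximal_ideal :: "'a::comm_ring_1 set \<Rightarrow> bool" where
  "maximal_ideal M \<longleftrightarrow> is_ideal M \<and> M \<noteq> UNIV \<and>
     (\<forall>J. is_ideal J \<and> M \<subseteq> J \<longrightarrow> J = M \<or> J = UNIV)"

definition minimal_ideal :: "'a::comm_ring_1 set \<Rightarrow> bool" where
  "minimal_ideal I \<longleftrightarrow> is_ideal I \<and> I \<noteq> {0} \<and>
     (\<forall>J. is_ideal J \<and> J \<subseteq> I \<longrightarrow> J = {0} \<or> J = I)"

text \<open>A local ring: a commutative ring with exactly one maximal ideal.\<close>
definition local_ring :: "'a::comm_ring_1 itself \<Rightarrow> bool" where
  "local_ring _ \<longleftrightarrow> (\<exists>!M::'a set. maximal_ideal M)"

text \<open>A finite commutative local ring is Frobenius iff it has a unique minimal ideal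
  (equivalently its socle is simple, i.e. soc(R) is isomorphic to R/m).\<close>
definition local_frobenius :: "'a::comm_ring_1 itself \<Rightarrow> bool" where
  "local_frobenius _ \<longleftrightarrow> (\<exists>!I::'a set. minimal_ideal I)"

text \<open>The maximal ideal of a local ring and the size q of its residue field R/m.\<close>
definition max_ideal :: "'a::comm_ring_1 itself \<Rightarrow> 'a set" where
  "max_ideal _ = (THE M::'a set. maximal_ideal M)"

definition residue_card :: "'a::comm_ring_1 itself \<Rightarrow> nat" where
  "residue_card T = card {{x + m | m. m \<in> max_ideal T} | x::'a. True}"

section \<open>Linear codes over R\<close>

definition linear_code :: "nat \<Rightarrow> 'a::comm_ring_1 vec set \<Rightarrow> bool" where
  "linear_code n C \<longleftrightarrow> C \<subseteq> carrier_vec n \<and> 0\<^sub>v n \<in> C \<and>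
     (\<forall>x\<in>C. \<forall>y\<in>C. x + y \<in> C) \<and> (\<forall>r. \<forall>x\<in>C. r \<cdot>\<^sub>v x \<in> C)"

text \<open>The R-submodule spanned by the rows of A.\<close>
definition row_module :: "'a::comm_ring_1 mat \<Rightarrow> 'a vec set" where
  "row_module A = {transpose_mat A *\<^sub>v c | c. c \<in> carrier_vec (dim_row A)}"

text \<open>G is a generator matrix of C: its rows form a basis of C
  (they span C and are R-linearly independent).\<close>
definition generator_matrix :: "nat \<Rightarrow> 'a::comm_ring_1 mat \<Rightarrow> 'a vec set \<Rightarrow> bool" where
  "generator_matrix n G C \<longleftrightarrow> dim_col G = n \<and> row_module G = C \<and>
     (\<forall>c \<in> carrier_vec (dim_row G). transpose_mat G *\<^sub>v c = 0\<^sub>v n \<longrightarrow> c = 0\<^sub>v (dim_row G))"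

definition free_code :: "nat \<Rightarrow> 'a::comm_ring_1 vec set \<Rightarrow> bool" where
  "free_code n C \<longleftrightarrow> linear_code n C \<and> (\<exists>G. generator_matrix n G C)"

definition dual_code :: "nat \<Rightarrow> 'a::comm_ring_1 vec set \<Rightarrow> 'a vec set" where
  "dual_code n C = {u \<in> carrier_vec n. \<forall>c\<in>C. u \<bullet> c = 0}"

definition parity_check_matrix :: "nat \<Rightarrow> 'a::comm_ring_1 mat \<Rightarrow> 'a vec set \<Rightarrow> bool" where
  "parity_check_matrix n H C \<longleftrightarrow> generator_matrix n H (dual_code n C)"

definition code_sum :: "'a::comm_ring_1 vec set \<Rightarrow> 'a vec set \<Rightarrow> 'a vec set" where
  "code_sum C1 C2 = {x + y | x y. x \<in> C1 \<and> y \<in> C2}"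

definition LCP :: "nat \<Rightarrow> 'a::comm_ring_1 vec set \<Rightarrow> 'a vec set \<Rightarrow> bool" where
  "LCP n C1 C2 \<longleftrightarrow> C1 \<inter> C2 = {0\<^sub>v n} \<and> code_sum C1 C2 = carrier_vec n"

text \<open>Rank_q(A) = log_q |M|, M the row module of A.\<close>
definition Rank_q :: "nat \<Rightarrow> 'a::comm_ring_1 mat \<Rightarrow> real" where
  "Rank_q q A = log (real q) (real (card (row_module A)))"

end

theory Submission
  imports Defs
begin

lemma ideal_UNIV_if_one: "is_ideal (I::'a::comm_ring_1 set) \<Longrightarrow> 1 \<in> I \<Longrightarrow> I = UNIV"
  unfolding is_ideal_def by (metis UNIV_I mult.right_neutral subsetI subset_antisym)

lemma nonunit_in_max:
  fixes x :: "'a::{comm_ring_1,finite}"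
  assumes loc: "local_ring TYPE('a)" and M: "maximal_ideal M" and nu: "\<not> x dvd 1"
  shows "x \<in> M"
proof -
  define J0 where "J0 = {r * x | r. True}"
  have J0i: "is_ideal J0" unfolding is_ideal_def J0_def
    by (auto, metis mult_zero_left, metis distrib_right, metis mult.assoc)
  have "1 \<notin> J0" using nu unfolding J0_def by (auto, metis dvdI mult.commute)
  define A where "A = {J. is_ideal J \<and> J \<noteq> UNIV \<and> J0 \<subseteq> J}"
  have "J0 \<in> A" using J0i \<open>1 \<notin> J0\<close> A_def by auto
  have "finite A" by simp
  then obtain J where JA: "J \<in> A" and Jm: "\<forall>b\<in>A. J \<le> b \<longrightarrow> J = b"
    using finite_has_maximal[of A] \<open>J0 \<in> A\<close> by blast
  have "maximal_ideal J" unfolding maximal_ideal_def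
    using JA Jm A_def by auto
  moreover have "\<exists>!M::'a set. maximal_ideal M" using loc unfolding local_ring_def .
  ultimately have "J = M" using M by blast
  moreover have "x \<in> J0" unfolding J0_def by (auto intro: exI[of _ 1])
  ultimately show ?thesis using JA A_def by auto
qed

lemma nonunit_nilpotent:
  fixes x :: "'a::{comm_ring_1,finite}"
  assumes loc: "local_ring TYPE('a)" and nu: "\<not> x dvd 1"
  shows "\<exists>a. x ^ a = 0"
proof -
  have "\<exists>!M::'a set. maximal_ideal M" using loc unfolding local_ring_def .
  then obtain M :: "'a set" where M: "maximal_ideal M" by blast
  have Mi: "is_ideal M" and MU: "M \<noteq> UNIV" using M maximal_ideal_def by auto
  have "\<not> inj (\<lambda>p::nat. x ^ p)"
  proof
    assume "inj (\<lambda>p::nat. x ^ p)"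
    then have "finite (UNIV::nat set)" using finite_imageD[of "\<lambda>p::nat. x ^ p" UNIV] by simp
    then show False by simp
  qed
  then obtain a b where ab: "a \<noteq> b" "x ^ a = x ^ b" unfolding inj_def by blast
  then obtain a p where ap: "p > 0" "x ^ a = x ^ (a + p)"
    by (metis less_imp_add_positive linorder_neqE_nat)
  have "\<not> (x ^ p) dvd 1" using nu ap(1)
    by (metis dvd_mult_left gr0_implies_Suc power_Suc)
  then have "x ^ p \<in> M" using nonunit_in_max[OF loc M] by blast
  have "(1 - x ^ p) dvd 1"
  proof (rule ccontr)
    assume "\<not> (1 - x ^ p) dvd 1"
    then have "1 - x ^ p \<in> M" using nonunit_in_max[OF loc M] by blast
    then have "(1 - x ^ p) + x ^ p \<in> M" using \<open>x ^ p \<in> M\<close> Mi unfolding is_ideal_def by blast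
    then show False using ideal_UNIV_if_one[OF Mi] MU by simp
  qed
  then obtain w where w: "1 = (1 - x ^ p) * w" by (auto elim: dvdE)
  have "x ^ a * (1 - x ^ p) = 0" using ap(2) by (simp add: algebra_simps power_add)
  then have "x ^ a * (1 - x ^ p) * w = 0" by simp
  then have "x ^ a = 0" using w by (simp add: mult.assoc)
  then show ?thesis by blast
qed

lemma socle_elem:
  assumes loc: "local_ring TYPE('a::{comm_ring_1,finite})" and fr: "local_frobenius TYPE('a)"
  shows "\<exists>s::'a. s \<noteq> 0 \<and> (\<forall>x. \<not> x dvd 1 \<longrightarrow> s * x = 0)"
proof -
  obtain S :: "'a set" where S: "minimal_ideal S" using fr unfolding local_frobenius_def by blast
  have Si: "is_ideal S" and S0: "S \<noteq> {0}" using S minimal_ideal_def by auto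
  have "0 \<in> S" using Si is_ideal_def by auto
  then obtain s where s: "s \<in> S" "s \<noteq> 0" using S0 by blast
  have "s * x = 0" if nu: "\<not> x dvd 1" for x
  proof -
    define J where "J = {x * t | t. t \<in> S}"
    have Ji: "is_ideal J" unfolding J_def is_ideal_def using Si unfolding is_ideal_def
      by (auto, metis mult_zero_right, metis distrib_left, metis mult.left_commute)
    have JS: "J \<subseteq> S" unfolding J_def using Si unfolding is_ideal_def by auto
    have "J = {0} \<or> J = S" using S Ji JS unfolding minimal_ideal_def by blast
    moreover have "J \<noteq> S"
    proof
      assume JS: "J = S"
      have "\<exists>t\<in>S. s = x ^ m * t" for m
      proof (induction m)
        case 0 then show ?case using s by auto
      next
        case (Suc m)
        then obtain t where t: "t \<in> S" "s = x ^ m * t" by blast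
        then have "t \<in> J" using JS by simp
        then obtain t' where "t' \<in> S" "t = x * t'" unfolding J_def by blast
        then show ?case using t by (auto intro!: bexI[of _ t'] simp: algebra_simps)
      qed
      moreover obtain a where "x ^ a = 0" using nonunit_nilpotent[OF loc nu] by blast
      ultimately obtain t where "s = x ^ a * t" by blast
      then show False using s \<open>x ^ a = 0\<close> by simp
    qed
    ultimately have "J = {0}" by blast
    then show ?thesis using s(1) unfolding J_def by (auto simp: mult.commute)
  qed
  then show ?thesis using s by blast
qed

lemma carrier_vec_lists: "carrier_vec n = vec_of_list ` {xs. length xs = n}"
proof (rule subset_antisym)
  show "carrier_vec n \<subseteq> vec_of_list ` {xs. length xs = n}"
  proof
    fix v assume "v \<in> carrier_vec n"
    then have "length (list_of_vec v) = n" using length_list_of_vec[of v] carrier_vecD[of v n] by argo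
    then have "list_of_vec v \<in> {xs. length xs = n}" by (rule CollectI)
    then have "vec_of_list (list_of_vec v) \<in> vec_of_list ` {xs. length xs = n}" by (rule imageI)
    then show "v \<in> vec_of_list ` {xs. length xs = n}" unfolding vec_list .
  qed
qed (auto intro: carrier_vecI)

lemma card_carrier_vec: "card (carrier_vec n :: 'a::finite vec set) = card (UNIV :: 'a set) ^ n"
proof -
  have "inj_on (vec_of_list :: 'a list \<Rightarrow> 'a vec) {xs. length xs = n}"
    by (metis inj_onI list_vec)
  moreover have "card {xs::'a list. length xs = n} = card (UNIV :: 'a set) ^ n"
    using card_lists_length_eq[of "UNIV :: 'a set" n] by simp
  ultimately show ?thesis unfolding carrier_vec_lists
    by (simp add: card_image)
qed

lemma finite_carrier_vec[simp]: "finite (carrier_vec n :: 'a::finite vec set)"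
proof -
  have "finite {xs::'a list. length xs = n}"
    using finite_lists_length_eq[of "UNIV :: 'a set" n] by simp
  then show ?thesis unfolding carrier_vec_lists by simp
qed

lemma surj_rows:
  fixes r :: "'i \<Rightarrow> 'a::comm_ring_1 vec" and s :: 'a
  assumes s: "s \<noteq> 0" "\<forall>x. \<not> x dvd 1 \<longrightarrow> s * x = 0"
  shows "finite I \<Longrightarrow> (\<forall>l\<in>I. r l \<in> carrier_vec n) \<Longrightarrow>
    (\<forall>c. (\<forall>t<n. (\<Sum>l\<in>I. c l * r l $ t) = 0) \<longrightarrow> (\<forall>l\<in>I. c l = 0)) \<Longrightarrow>
    \<exists>u\<in>carrier_vec n. \<forall>l\<in>I. r l \<bullet> u = y l"
proof (induction "card I" arbitrary: I r y)
  case 0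
  then show ?case by (intro bexI[of _ "0\<^sub>v n"]) auto
next
  case (Suc m)
  note fin = Suc.prems(1) and rc = Suc.prems(2) and ind = Suc.prems(3)
  have "I \<noteq> {}" using Suc.hyps(2) by auto
  have "\<exists>i\<in>I. \<exists>j<n. r i $ j dvd 1"
  proof (rule ccontr)
    assume "\<not> ?thesis"
    then have "\<forall>t<n. (\<Sum>l\<in>I. s * r l $ t) = 0" using s(2) by auto
    moreover have "(\<forall>t<n. (\<Sum>l\<in>I. (\<lambda>_. s) l * r l $ t) = 0) \<longrightarrow> (\<forall>l\<in>I. (\<lambda>_. s) l = 0)"
      using ind by (rule allE)
    ultimately have "\<forall>l\<in>I. s = 0" by simp
    then show False using s(1) \<open>I \<noteq> {}\<close> by blast
  qed
  then obtain i j where ij: "i \<in> I" "j < n" "r i $ j dvd 1" by blast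
  then obtain w where w: "r i $ j * w = 1" by (metis dvdE)
  define a where "a l = r l $ j * w" for l
  define r' where "r' l = r l - a l \<cdot>\<^sub>v r i" for l
  define I' where "I' = I - {i}"
  have cardI': "m = card I'" using Suc.hyps(2) ij(1) fin unfolding I'_def by auto
  have rc': "\<forall>l\<in>I'. r' l \<in> carrier_vec n" using rc ij(1) unfolding r'_def I'_def by auto
  have r'idx: "r' l $ t = r l $ t - a l * r i $ t" if "l \<in> I'" "t < n" for l t
    using rc that ij(1) unfolding r'_def I'_def by auto
  have r'j: "r' l $ j = 0" if "l \<in> I'" for l
  proof -
    have "w * r i $ j = 1" using w by (simp add: mult.commute)
    then show ?thesis using r'idx[OF that ij(2)] unfolding a_def by (simp add: mult.assoc)
  qed
  have ind': "\<forall>c. (\<forall>t<n. (\<Sum>l\<in>I'. c l * r' l $ t) = 0) \<longrightarrow> (\<forall>l\<in>I'. c l = 0)"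
  proof (intro allI impI)
    fix c assume H: "\<forall>t<n. (\<Sum>l\<in>I'. c l * r' l $ t) = 0"
    define c' where "c' l = (if l = i then - (\<Sum>l\<in>I'. c l * a l) else c l)" for l
    have "(\<Sum>l\<in>I. c' l * r l $ t) = 0" if t: "t < n" for t
    proof -
      have "(\<Sum>l\<in>I. c' l * r l $ t) = c' i * r i $ t + (\<Sum>l\<in>I'. c' l * r l $ t)"
        unfolding I'_def using fin ij(1) by (simp add: sum.remove)
      also have "(\<Sum>l\<in>I'. c' l * r l $ t) = (\<Sum>l\<in>I'. c l * r l $ t)"
        unfolding c'_def I'_def by (rule sum.cong) auto
      also have "c' i * r i $ t = - (\<Sum>l\<in>I'. c l * a l * r i $ t)"
        unfolding c'_def by (simp add: sum_distrib_right)
      also have "- (\<Sum>l\<in>I'. c l * a l * r i $ t) + (\<Sum>l\<in>I'. c l * r l $ t)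
          = (\<Sum>l\<in>I'. c l * r' l $ t)"
      proof -
        have "(\<Sum>l\<in>I'. c l * r' l $ t) = (\<Sum>l\<in>I'. c l * r l $ t - c l * a l * r i $ t)"
          by (rule sum.cong) (simp_all add: r'idx t right_diff_distrib mult.assoc)
        also have "\<dots> = (\<Sum>l\<in>I'. c l * r l $ t) - (\<Sum>l\<in>I'. c l * a l * r i $ t)"
          by (rule sum_subtractf)
        finally show ?thesis by simp
      qed
      finally show ?thesis using H t by simp
    qed
    then have "\<forall>l\<in>I. c' l = 0" using ind by blast
    then show "\<forall>l\<in>I'. c l = 0"
    proof (intro ballI)
      fix l assume "\<forall>l\<in>I. c' l = 0" "l \<in> I'"
      then have "l \<in> I" "l \<noteq> i" "c' l = 0" unfolding I'_def by auto
      then show "c l = 0" unfolding c'_def by simp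
    qed
  qed
  have finI': "finite I'" using fin unfolding I'_def by simp
  from Suc.hyps(1)[OF cardI' finI' rc' ind', of "\<lambda>l. y l - a l * y i"]
  obtain u' where u': "u' \<in> carrier_vec n" "\<forall>l\<in>I'. r' l \<bullet> u' = y l - a l * y i"
    by blast
  define t0 where "t0 = (y i - r i \<bullet> u') * w"
  define u where "u = u' + t0 \<cdot>\<^sub>v unit_vec n j"
  have uc: "u \<in> carrier_vec n" unfolding u_def using u' by auto
  have ri: "r i \<in> carrier_vec n" using rc ij by auto
  have sp: "v \<bullet> u = v \<bullet> u' + t0 * v $ j" if "v \<in> carrier_vec n" for v
    unfolding u_def using that u' ij(2)
    by (simp add: scalar_prod_add_distrib[of _ n])
  have wr: "w * r i $ j = 1" using w by (simp add: mult.commute)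
  have "t0 * r i $ j = y i - r i \<bullet> u'" unfolding t0_def by (simp add: mult.assoc wr)
  then have "r i \<bullet> u = y i" unfolding sp[OF ri] by simp
  moreover have "r l \<bullet> u = y l" if l: "l \<in> I'" for l
  proof -
    have rl: "r l \<in> carrier_vec n" using l rc unfolding I'_def by auto
    have "r' l \<bullet> u = r l \<bullet> u - a l * (r i \<bullet> u)"
      unfolding r'_def using rl ri uc by (simp add: minus_scalar_prod_distrib[of _ n])
    moreover have "r' l \<bullet> u = y l - a l * y i"
      using sp[OF rc'[rule_format, OF l]] r'j[OF l] u'(2) l by simp
    ultimately show ?thesis using \<open>r i \<bullet> u = y i\<close> by (simp add: algebra_simps)
  qed
  ultimately have "\<forall>l\<in>I. r l \<bullet> u = y l" unfolding I'_def by blast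
  then show ?case using uc by blast
qed

lemma gen_carrier: "generator_matrix n G C \<Longrightarrow> G \<in> carrier_mat (dim_row G) n"
  unfolding generator_matrix_def by (auto intro: carrier_matI)

lemma tmv_index:
  fixes G :: "'a::comm_ring_1 mat"
  assumes G: "G \<in> carrier_mat k n" and c: "c \<in> carrier_vec k" and t: "t < n"
  shows "(transpose_mat G *\<^sub>v c) $ t = (\<Sum>l\<in>{0..<k}. c $ l * G $$ (l, t))"
proof -
  have "(transpose_mat G *\<^sub>v c) $ t = col G t \<bullet> c" using G t by simp
  also have "\<dots> = (\<Sum>l\<in>{0..<k}. G $$ (l, t) * c $ l)" unfolding scalar_prod_def using G c t by simp
  also have "\<dots> = (\<Sum>l\<in>{0..<k}. c $ l * G $$ (l, t))" by (rule sum.cong) (simp_all add: mult.commute)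
  finally show ?thesis .
qed

lemma gen_indep:
  fixes G :: "'a::comm_ring_1 mat"
  assumes g: "generator_matrix n G C" and G: "G \<in> carrier_mat k n"
  shows "\<forall>c. (\<forall>t<n. (\<Sum>l\<in>{0..<k}. c l * row G l $ t) = 0) \<longrightarrow> (\<forall>l\<in>{0..<k}. c l = 0)"
proof (intro allI impI)
  fix c assume H: "\<forall>t<n. (\<Sum>l\<in>{0..<k}. c l * row G l $ t) = 0"
  define cv where "cv = vec k c"
  have cv: "cv \<in> carrier_vec k" unfolding cv_def by simp
  have "transpose_mat G *\<^sub>v cv = 0\<^sub>v n"
  proof (rule eq_vecI)
    fix t assume "t < dim_vec (0\<^sub>v n :: 'a vec)"
    then have t: "t < n" by simp
    have "(transpose_mat G *\<^sub>v cv) $ t = (\<Sum>l\<in>{0..<k}. cv $ l * G $$ (l, t))"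
      by (rule tmv_index[OF G cv t])
    also have "\<dots> = (\<Sum>l\<in>{0..<k}. c l * row G l $ t)"
      by (rule sum.cong) (use G t in \<open>auto simp: cv_def\<close>)
    finally show "(transpose_mat G *\<^sub>v cv) $ t = 0\<^sub>v n $ t" using H t by simp
  qed (use G in simp)
  then have "cv = 0\<^sub>v k" using g cv G unfolding generator_matrix_def by auto
  then show "\<forall>l\<in>{0..<k}. c l = 0" unfolding cv_def
    by (metis atLeastLessThan_iff index_vec index_zero_vec(1))
qed

lemma gen_surj:
  fixes G :: "'a::comm_ring_1 mat" and s :: 'a
  assumes s: "s \<noteq> 0" "\<forall>x. \<not> x dvd 1 \<longrightarrow> s * x = 0"
    and g: "generator_matrix n G C" and G: "G \<in> carrier_mat k n" and y: "y \<in> carrier_vec k"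
  shows "\<exists>u\<in>carrier_vec n. G *\<^sub>v u = y"
proof -
  have "\<exists>u\<in>carrier_vec n. \<forall>l\<in>{0..<k}. row G l \<bullet> u = y $ l"
    by (rule surj_rows[OF s, of "{0..<k}" "row G" n]) (use gen_indep[OF g G] G in auto)
  then obtain u where u: "u \<in> carrier_vec n" "\<forall>l\<in>{0..<k}. row G l \<bullet> u = y $ l" by blast
  have "G *\<^sub>v u = y" by (rule eq_vecI) (use u G y in auto)
  then show ?thesis using u by blast
qed

lemma dual_char:
  fixes G :: "'a::comm_ring_1 mat"
  assumes g: "generator_matrix n G C" and G: "G \<in> carrier_mat k n"
  shows "dual_code n C = {u \<in> carrier_vec n. G *\<^sub>v u = 0\<^sub>v k}"
proof -
  have C: "C = {transpose_mat G *\<^sub>v c | c. c \<in> carrier_vec k}"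
    using g G unfolding generator_matrix_def row_module_def by auto
  have key: "u \<bullet> (transpose_mat G *\<^sub>v c) = c \<bullet> (G *\<^sub>v u)" if "u \<in> carrier_vec n" "c \<in> carrier_vec k" for u c
  proof -
    have "u \<bullet> (transpose_mat G *\<^sub>v c) = (transpose_mat G *\<^sub>v c) \<bullet> u"
      by (rule comm_scalar_prod[of _ n]) (use that G in auto)
    also have "\<dots> = c \<bullet> (G *\<^sub>v u)" by (rule transpose_vec_mult_scalar[OF G that(1) that(2)])
    finally show ?thesis .
  qed
  show ?thesis
  proof (rule subset_antisym; rule subsetI)
    fix u assume "u \<in> dual_code n C"
    then have u: "u \<in> carrier_vec n" and H: "\<forall>c\<in>C. u \<bullet> c = 0" unfolding dual_code_def by auto
    have "G *\<^sub>v u = 0\<^sub>v k"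
    proof (rule eq_vecI)
      fix l assume "l < dim_vec (0\<^sub>v k :: 'a vec)"
      then have l: "l < k" by simp
      have "transpose_mat G *\<^sub>v unit_vec k l \<in> C" unfolding C using unit_vec_carrier by blast
      then have "u \<bullet> (transpose_mat G *\<^sub>v unit_vec k l) = 0" using H by blast
      then have "unit_vec k l \<bullet> (G *\<^sub>v u) = 0" using key[OF u, of "unit_vec k l"] by simp
      moreover have "G *\<^sub>v u \<in> carrier_vec k" using G u by simp
      ultimately show "(G *\<^sub>v u) $ l = 0\<^sub>v k $ l" using l scalar_prod_left_unit[of "G *\<^sub>v u" k l] by simp
    qed (use G in simp)
    then show "u \<in> {u \<in> carrier_vec n. G *\<^sub>v u = 0\<^sub>v k}" using u by simp
  next
    fix u assume "u \<in> {u \<in> carrier_vec n. G *\<^sub>v u = 0\<^sub>v k}"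
    then have u: "u \<in> carrier_vec n" and z: "G *\<^sub>v u = 0\<^sub>v k" by auto
    have "u \<bullet> x = 0" if "x \<in> C" for x
    proof -
      obtain c where c: "c \<in> carrier_vec k" "x = transpose_mat G *\<^sub>v c" using \<open>x \<in> C\<close> C by blast
      show ?thesis using key[OF u c(1)] c z by simp
    qed
    then show "u \<in> dual_code n C" using u unfolding dual_code_def by auto
  qed
qed

lemma tmv_inj:
  fixes G :: "'a::comm_ring_1 mat"
  assumes g: "generator_matrix n G C" and G: "G \<in> carrier_mat k n"
  shows "inj_on (\<lambda>c. transpose_mat G *\<^sub>v c) (carrier_vec k)"
proof (rule inj_onI)
  fix a b :: "'a vec" assume a: "a \<in> carrier_vec k" and b: "b \<in> carrier_vec k"
    and e: "transpose_mat G *\<^sub>v a = transpose_mat G *\<^sub>v b"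
  have GT: "transpose_mat G \<in> carrier_mat n k" using G by simp
  have "transpose_mat G *\<^sub>v (a - b) = 0\<^sub>v n"
    using mult_minus_distrib_mat_vec[OF GT a b] e GT b by simp
  then have "a - b = 0\<^sub>v k" using g G a b unfolding generator_matrix_def by auto
  then show "a = b"
    by (intro eq_vecI) (use a b in \<open>auto dest: arg_cong[where f = "\<lambda>v. v $ _"]\<close>, metis carrier_vecD eq_iff_diff_eq_0 index_minus_vec(1) index_zero_vec(1))
qed

lemma card_gen:
  fixes G :: "'a::{comm_ring_1,finite} mat"
  assumes g: "generator_matrix n G C" and G: "G \<in> carrier_mat k n"
  shows "card C = card (UNIV :: 'a::{comm_ring_1,finite} set) ^ k"
proof -
  have C: "C = (\<lambda>c. transpose_mat G *\<^sub>v c) ` carrier_vec k"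
    using g G unfolding generator_matrix_def row_module_def by auto
  show ?thesis unfolding C card_image[OF tmv_inj[OF g G]] card_carrier_vec ..
qed

lemma vec_add_diff: "a \<in> carrier_vec n \<Longrightarrow> b \<in> carrier_vec n \<Longrightarrow> a + (b - a) = (b :: 'a::ab_group_add vec)"
  by (intro eq_vecI) auto

lemma vec_diff_add: "a \<in> carrier_vec n \<Longrightarrow> z \<in> carrier_vec n \<Longrightarrow> (a + z) - a = (z :: 'a::ab_group_add vec)"
  by (intro eq_vecI) auto

lemma card_dual:
  fixes G :: "'a::{comm_ring_1,finite} mat" and s :: 'a
  assumes s: "s \<noteq> 0" "\<forall>x. \<not> x dvd 1 \<longrightarrow> s * x = 0"
    and g: "generator_matrix n G C" and G: "G \<in> carrier_mat k n"
  shows "card (UNIV :: 'a set) ^ k * card (dual_code n C) = card (UNIV :: 'a set) ^ n"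
proof -
  define K where "K = {u \<in> carrier_vec n. G *\<^sub>v u = 0\<^sub>v k}"
  have DK: "dual_code n C = K" unfolding K_def by (rule dual_char[OF g G])
  define sec where "sec y = (SOME u. u \<in> carrier_vec n \<and> G *\<^sub>v u = y)" for y
  have sec: "sec y \<in> carrier_vec n \<and> G *\<^sub>v sec y = y" if "y \<in> carrier_vec k" for y
    unfolding sec_def by (rule someI_ex) (use gen_surj[OF s g G that] in blast)
  define \<phi> where "\<phi> u = (G *\<^sub>v u, u - sec (G *\<^sub>v u))" for u
  define \<psi> where "\<psi> p = sec (fst p) + snd p" for p
  have "bij_betw \<phi> (carrier_vec n) (carrier_vec k \<times> K)"
  proof (rule bij_betw_byWitness[where f' = \<psi>])
    show "\<forall>a\<in>carrier_vec n. \<psi> (\<phi> a) = a"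
    proof
      fix a :: "'a vec" assume a: "a \<in> carrier_vec n"
      have Ga: "G *\<^sub>v a \<in> carrier_vec k" using G a by simp
      show "\<psi> (\<phi> a) = a" unfolding \<psi>_def \<phi>_def using vec_add_diff[OF conjunct1[OF sec[OF Ga]] a] by simp
    qed
    show "\<forall>b\<in>carrier_vec k \<times> K. \<phi> (\<psi> b) = b"
    proof
      fix b :: "'a vec \<times> 'a vec" assume b: "b \<in> carrier_vec k \<times> K"
      obtain y z :: "'a vec" where yz: "b = (y, z)" "y \<in> carrier_vec k" "z \<in> carrier_vec n" "G *\<^sub>v z = 0\<^sub>v k"
        using b K_def by auto
      have sy: "sec y \<in> carrier_vec n" "G *\<^sub>v sec y = y" using sec[OF yz(2)] by auto
      have "G *\<^sub>v (sec y + z) = y"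
        using mult_add_distrib_mat_vec[OF G sy(1) yz(3)] sy yz by simp
      then show "\<phi> (\<psi> b) = b" unfolding \<phi>_def \<psi>_def using yz vec_diff_add[OF sy(1) yz(3)] by simp
    qed
    show "\<phi> ` carrier_vec n \<subseteq> carrier_vec k \<times> K"
    proof
      fix p :: "'a vec \<times> 'a vec" assume "p \<in> \<phi> ` carrier_vec n"
      then obtain a :: "'a vec" where a: "a \<in> carrier_vec n" "p = \<phi> a" by blast
      have Ga: "G *\<^sub>v a \<in> carrier_vec k" using G a by simp
      have sa: "sec (G *\<^sub>v a) \<in> carrier_vec n" "G *\<^sub>v sec (G *\<^sub>v a) = G *\<^sub>v a" using sec[OF Ga] by auto
      have "G *\<^sub>v (a - sec (G *\<^sub>v a)) = 0\<^sub>v k"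
        using mult_minus_distrib_mat_vec[OF G a(1) sa(1)] sa Ga by simp
      then show "p \<in> carrier_vec k \<times> K" unfolding a(2) \<phi>_def K_def using Ga a sa by auto
    qed
    show "\<psi> ` ((carrier_vec k :: 'a vec set) \<times> K) \<subseteq> carrier_vec n"
      unfolding \<psi>_def K_def using sec by auto
  qed
  then have "card (carrier_vec n :: 'a vec set) = card ((carrier_vec k :: 'a vec set) \<times> K)" by (rule bij_betw_same_card)
  also have "\<dots> = card (carrier_vec k :: 'a vec set) * card K" by (rule card_cartesian_product)
  finally show ?thesis unfolding DK card_carrier_vec by simp
qed

lemma col_append_rows:
  assumes A: "A \<in> carrier_mat k1 n" and B: "B \<in> carrier_mat k2 n" and t: "t < n"
  shows "col (A @\<^sub>r B) t = col A t @\<^sub>v col B t"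
  by (rule eq_vecI) (use A B t in \<open>auto simp: append_rows_def\<close>)

lemma tmv_append:
  fixes A :: "'a::comm_ring_1 mat"
  assumes A: "A \<in> carrier_mat k1 n" and B: "B \<in> carrier_mat k2 n"
    and a: "a \<in> carrier_vec k1" and b: "b \<in> carrier_vec k2"
  shows "transpose_mat (A @\<^sub>r B) *\<^sub>v (a @\<^sub>v b) = transpose_mat A *\<^sub>v a + transpose_mat B *\<^sub>v b"
proof (rule eq_vecI)
  have AB: "A @\<^sub>r B \<in> carrier_mat (k1 + k2) n" using A B by auto
  fix t assume "t < dim_vec (transpose_mat A *\<^sub>v a + transpose_mat B *\<^sub>v b)"
  then have t: "t < n" using A B by simp
  have "(transpose_mat (A @\<^sub>r B) *\<^sub>v (a @\<^sub>v b)) $ t = col (A @\<^sub>r B) t \<bullet> (a @\<^sub>v b)"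
    using AB t by simp
  also have "\<dots> = col A t \<bullet> a + col B t \<bullet> b"
    unfolding col_append_rows[OF A B t] by (rule scalar_prod_append) (use A B a b t in auto)
  finally show "(transpose_mat (A @\<^sub>r B) *\<^sub>v (a @\<^sub>v b)) $ t = (transpose_mat A *\<^sub>v a + transpose_mat B *\<^sub>v b) $ t"
    using A B t by simp
qed (use carrier_matD(2)[OF carrier_append_rows[OF A B]] A B in simp)

lemma inv_from_surj:
  fixes A :: "'a::{comm_ring_1,finite} mat"
  assumes A: "A \<in> carrier_mat N N"
    and surj: "\<forall>v\<in>carrier_vec N. \<exists>c\<in>carrier_vec N. transpose_mat A *\<^sub>v c = v"
  shows "invertible_mat A"
proof -
  define AT where "AT = transpose_mat A"
  have AT: "AT \<in> carrier_mat N N" unfolding AT_def using A by simp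
  have img: "(\<lambda>c. AT *\<^sub>v c) ` carrier_vec N = carrier_vec N"
    using surj AT unfolding AT_def by (auto simp: image_iff)
  have inj: "inj_on (\<lambda>c. AT *\<^sub>v c) (carrier_vec N)"
  proof -
    have "card ((\<lambda>c. AT *\<^sub>v c) ` carrier_vec N) = card (carrier_vec N :: 'a vec set)" using img by simp
    then show ?thesis using inj_on_iff_eq_card[of "carrier_vec N :: 'a vec set" "\<lambda>c. AT *\<^sub>v c"] by simp
  qed
  define cs where "cs j = (SOME c. c \<in> carrier_vec N \<and> AT *\<^sub>v c = unit_vec N j)" for j
  have cs: "cs j \<in> carrier_vec N \<and> AT *\<^sub>v cs j = unit_vec N j" for j
    unfolding cs_def by (rule someI_ex) (use surj unit_vec_carrier in \<open>auto simp: AT_def\<close>)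
  define B where "B = mat N N (\<lambda>(i, j). cs j $ i)"
  have B: "B \<in> carrier_mat N N" unfolding B_def by simp
  have colB: "col B j = cs j" if "j < N" for j
    by (rule eq_vecI) (use that cs[of j] in \<open>auto simp: B_def\<close>)
  have ATB: "AT * B = 1\<^sub>m N"
  proof (rule eq_matI)
    fix i j assume "i < dim_row (1\<^sub>m N :: 'a mat)" "j < dim_col (1\<^sub>m N :: 'a mat)"
    then have ij: "i < N" "j < N" by auto
    have "(AT * B) $$ (i, j) = row AT i \<bullet> col B j" using AT B ij by simp
    also have "\<dots> = (AT *\<^sub>v cs j) $ i" using AT ij colB by simp
    also have "\<dots> = 1\<^sub>m N $$ (i, j)" using cs[of j] ij by simp
    finally show "(AT * B) $$ (i, j) = 1\<^sub>m N $$ (i, j)" .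
  qed (use AT B in auto)
  have BAT: "B * AT = 1\<^sub>m N"
  proof (rule mat_col_eqI)
    fix j assume "j < dim_col (1\<^sub>m N :: 'a mat)"
    then have j: "j < N" by simp
    have "AT * (B * AT) = AT"
      using AT B ATB by (simp add: assoc_mult_mat[symmetric, of AT N N B N AT N])
    then have "col (AT * (B * AT)) j = col AT j" by simp
    then have "AT *\<^sub>v col (B * AT) j = AT *\<^sub>v unit_vec N j"
      using AT B j col_mult2[of AT N N "B * AT" N j] col_mult2[of AT N N "1\<^sub>m N" N j] by simp
    moreover have "col (B * AT) j \<in> carrier_vec N" using B AT j by simp
    ultimately have "col (B * AT) j = unit_vec N j"
      using inj unit_vec_carrier unfolding inj_on_def by blast
    then show "col (B * AT) j = col (1\<^sub>m N) j" using j by simp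
  qed (use AT B in auto)
  have "A * transpose_mat B = 1\<^sub>m N"
    using arg_cong[OF BAT, of transpose_mat] transpose_mult[OF B AT] unfolding AT_def by simp
  moreover have "transpose_mat B * A = 1\<^sub>m N"
    using arg_cong[OF ATB, of transpose_mat] transpose_mult[OF AT B] unfolding AT_def by simp
  ultimately show ?thesis unfolding invertible_mat_def inverts_mat_def using A B by auto
qed

lemma mv_uminus:
  fixes M :: "'a::comm_ring_1 mat"
  assumes "v \<in> carrier_vec (dim_col M)"
  shows "M *\<^sub>v (- v) = - (M *\<^sub>v v)"
  by (rule eq_vecI) (use assms in \<open>auto simp: scalar_prod_uminus_right\<close>)

lemma append_zero:
  fixes A B :: "'a::comm_ring_1 mat"
  assumes gA: "generator_matrix n A CA" and gB: "generator_matrix n B CB"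
    and A: "A \<in> carrier_mat k1 n" and B: "B \<in> carrier_mat k2 n"
    and inter: "\<forall>x. x \<in> CA \<longrightarrow> x \<in> CB \<longrightarrow> x = 0\<^sub>v n"
    and c: "c \<in> carrier_vec (k1 + k2)" and z: "transpose_mat (A @\<^sub>r B) *\<^sub>v c = 0\<^sub>v n"
  shows "c = 0\<^sub>v (k1 + k2)"
proof -
  define a where "a = vec_first c k1"
  define b where "b = vec_last c k2"
  have ab: "c = a @\<^sub>v b" unfolding a_def b_def using c by simp
  have a: "a \<in> carrier_vec k1" and b: "b \<in> carrier_vec k2" unfolding a_def b_def by auto
  have AT: "transpose_mat A \<in> carrier_mat n k1" and BT: "transpose_mat B \<in> carrier_mat n k2" using A B by auto
  have e: "transpose_mat A *\<^sub>v a + transpose_mat B *\<^sub>v b = 0\<^sub>v n"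
    using z tmv_append[OF A B a b] ab by simp
  have x1: "transpose_mat A *\<^sub>v a \<in> CA"
    using gA A a unfolding generator_matrix_def row_module_def by auto
  have "transpose_mat B *\<^sub>v (- b) = - (transpose_mat B *\<^sub>v b)"
    by (rule mv_uminus) (use B b in simp)
  also have "\<dots> = transpose_mat A *\<^sub>v a"
  proof (rule eq_vecI)
    fix t assume "t < dim_vec (transpose_mat A *\<^sub>v a)"
    then have t: "t < n" using A by simp
    have "(transpose_mat A *\<^sub>v a + transpose_mat B *\<^sub>v b) $ t = 0" using e t by simp
    then have "(transpose_mat A *\<^sub>v a) $ t + (transpose_mat B *\<^sub>v b) $ t = 0" using t A B by simp
    then have h: "(transpose_mat B *\<^sub>v b) $ t + (transpose_mat A *\<^sub>v a) $ t = 0" by (simp only: add.commute)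
    have "(- (transpose_mat B *\<^sub>v b)) $ t = - ((transpose_mat B *\<^sub>v b) $ t)" using t B by simp
    also have "\<dots> = (transpose_mat A *\<^sub>v a) $ t" using h by (rule neg_eq_iff_add_eq_0[THEN iffD2])
    finally show "(- (transpose_mat B *\<^sub>v b)) $ t = (transpose_mat A *\<^sub>v a) $ t" .
  qed (use A B in simp)
  finally have x2: "transpose_mat A *\<^sub>v a \<in> CB"
    using gB B b unfolding generator_matrix_def row_module_def
    by (metis (mono_tags, lifting) carrier_matD(1) mem_Collect_eq uminus_carrier_vec)
  have x0: "transpose_mat A *\<^sub>v a = 0\<^sub>v n" using inter x1 x2 by blast
  then have a0: "a = 0\<^sub>v k1" using gA A a unfolding generator_matrix_def by auto
  have "transpose_mat B *\<^sub>v b = 0\<^sub>v n"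
    using e x0 BT b by simp
  then have b0: "b = 0\<^sub>v k2" using gB B b unfolding generator_matrix_def by auto
  show ?thesis unfolding ab a0 b0 by (rule eq_vecI) auto
qed

lemma tmv_inj_gen:
  fixes M :: "'a::comm_ring_1 mat"
  assumes M: "M \<in> carrier_mat N n"
    and z: "\<forall>c\<in>carrier_vec N. transpose_mat M *\<^sub>v c = 0\<^sub>v n \<longrightarrow> c = 0\<^sub>v N"
  shows "inj_on (\<lambda>c. transpose_mat M *\<^sub>v c) (carrier_vec N)"
proof (rule inj_onI)
  fix a b :: "'a vec" assume a: "a \<in> carrier_vec N" and b: "b \<in> carrier_vec N"
    and e: "transpose_mat M *\<^sub>v a = transpose_mat M *\<^sub>v b"
  have MT: "transpose_mat M \<in> carrier_mat n N" using M by simp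
  have "transpose_mat M *\<^sub>v (a - b) = 0\<^sub>v n"
    using mult_minus_distrib_mat_vec[OF MT a b] e MT b by simp
  then have "a - b = 0\<^sub>v N" using z a b by auto
  then show "a = b"
    by (intro eq_vecI) (use a b in \<open>auto dest: arg_cong[where f = "\<lambda>v. v $ _"]\<close>, metis carrier_vecD eq_iff_diff_eq_0 index_minus_vec(1) index_zero_vec(1))
qed

lemma surj_of_inj:
  fixes M :: "'a::{comm_ring_1,finite} mat"
  assumes M: "M \<in> carrier_mat n n"
    and inj: "inj_on (\<lambda>c. transpose_mat M *\<^sub>v c) (carrier_vec n)"
  shows "\<forall>v\<in>carrier_vec n. \<exists>c\<in>carrier_vec n. transpose_mat M *\<^sub>v c = v"
proof -
  have sub: "(\<lambda>c. transpose_mat M *\<^sub>v c) ` carrier_vec n \<subseteq> carrier_vec n" using M by auto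
  have "card ((\<lambda>c. transpose_mat M *\<^sub>v c) ` carrier_vec n) = card (carrier_vec n :: 'a vec set)"
    using card_image[OF inj] .
  then have "(\<lambda>c. transpose_mat M *\<^sub>v c) ` carrier_vec n = carrier_vec n"
    using card_subset_eq[OF finite_carrier_vec sub] by simp
  then show ?thesis by (metis imageE)
qed

lemma card_ge2: "2 \<le> card (UNIV :: 'a::{comm_ring_1,finite} set)"
proof -
  have "card {0::'a, 1} = 2" by simp
  moreover have "card {0::'a, 1} \<le> card (UNIV :: 'a set)" by (rule card_mono) auto
  ultimately show ?thesis by simp
qed

lemma residue_card_ge2:
  assumes loc: "local_ring TYPE('a::{comm_ring_1,finite})"
  shows "2 \<le> residue_card TYPE('a)"
proof -
  have ex1: "\<exists>!M::'a set. maximal_ideal M" using loc unfolding local_ring_def .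
  then obtain M :: "'a set" where M: "maximal_ideal M" by blast
  have MM: "max_ideal TYPE('a) = M" unfolding max_ideal_def using ex1 M by (metis the_equality)
  have Mi: "is_ideal M" and MU: "M \<noteq> UNIV" using M maximal_ideal_def by auto
  have M0: "0 \<in> M" using Mi is_ideal_def by auto
  have "1 \<notin> M" using ideal_UNIV_if_one[OF Mi] MU by blast
  define X where "X = {{x + m | m. m \<in> M} | x::'a. True}"
  have c0: "{0 + m | m. m \<in> M} \<in> X" unfolding X_def by blast
  have c1: "{1 + m | m. m \<in> M} \<in> X" unfolding X_def by blast
  have "1 + 0 \<in> {1 + m | m. m \<in> M}" using M0 by blast
  moreover have "(1::'a) + 0 \<notin> {0 + m | m. m \<in> M}" using \<open>1 \<notin> M\<close> by auto
  ultimately have ne: "{0 + m | m. m \<in> M} \<noteq> {1 + m | m. m \<in> M}" by blast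
  have "finite X" by (rule finite_subset[of _ UNIV]) auto
  then have "card {{0 + m | m. m \<in> M}, {1 + m | m. m \<in> M}} \<le> card X"
    using c0 c1 by (intro card_mono) auto
  moreover have "card {{0 + m | m. m \<in> M}, {1 + m | m. m \<in> M}} = 2" using ne by simp
  ultimately show ?thesis unfolding residue_card_def MM X_def by simp
qed

theorem corollary3p18:
  fixes C1 C2 :: "'a::{comm_ring_1, finite} vec set"
    and G1 G2 H1 H2 :: "'a mat"
    and n :: nat
  assumes "local_ring TYPE('a)"
    and "local_frobenius TYPE('a)"
    and "free_code n C1" and "free_code n C2"
    and "generator_matrix n G1 C1" and "generator_matrix n G2 C2"
    and "parity_check_matrix n H1 C1" and "parity_check_matrix n H2 C2"
    and "code_sum C1 C2 = carrier_vec n"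
  shows "(LCP n C1 C2 \<longleftrightarrow> invertible_mat (G1 @\<^sub>r G2))
    \<and> (invertible_mat (G1 @\<^sub>r G2) \<longleftrightarrow> invertible_mat (H1 @\<^sub>r H2))
    \<and> (invertible_mat (H1 @\<^sub>r H2) \<longleftrightarrow>
         (let q = residue_card TYPE('a) in
            Rank_q q (H2 * transpose_mat G1) = Rank_q q G1
          \<or> Rank_q q (H1 * transpose_mat G2) = Rank_q q G2))"
proof -
  obtain s :: 'a where s: "s \<noteq> 0" "\<forall>x. \<not> x dvd 1 \<longrightarrow> s * x = 0"
    using socle_elem[OF assms(1,2)] by blast
  note g1 = assms(5) and g2 = assms(6)
  have hd1: "generator_matrix n H1 (dual_code n C1)" using assms(7) unfolding parity_check_matrix_def .
  have hd2: "generator_matrix n H2 (dual_code n C2)" using assms(8) unfolding parity_check_matrix_def .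
  define k1 where "k1 = dim_row G1"
  define k2 where "k2 = dim_row G2"
  define h1 where "h1 = dim_row H1"
  define h2 where "h2 = dim_row H2"
  have G1: "G1 \<in> carrier_mat k1 n" unfolding k1_def by (rule gen_carrier[OF g1])
  have G2: "G2 \<in> carrier_mat k2 n" unfolding k2_def by (rule gen_carrier[OF g2])
  have H1: "H1 \<in> carrier_mat h1 n" unfolding h1_def by (rule gen_carrier[OF hd1])
  have H2: "H2 \<in> carrier_mat h2 n" unfolding h2_def by (rule gen_carrier[OF hd2])
  define Q where "Q = card (UNIV :: 'a set)"
  have "2 \<le> Q" unfolding Q_def by (rule card_ge2)
  then have Q2: "1 < Q" by simp
  have cC1: "card C1 = Q ^ k1" using card_gen[OF g1 G1] Q_def by simp
  have cC2: "card C2 = Q ^ k2" using card_gen[OF g2 G2] Q_def by simp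
  have cD1: "card (dual_code n C1) = Q ^ h1" using card_gen[OF hd1 H1] Q_def by simp
  have cD2: "card (dual_code n C2) = Q ^ h2" using card_gen[OF hd2 H2] Q_def by simp
  have "Q ^ (k1 + h1) = Q ^ n" using card_dual[OF s g1 G1] cD1 Q_def by (simp add: power_add)
  then have kh1: "k1 + h1 = n" using Q2 by simp
  have "Q ^ (k2 + h2) = Q ^ n" using card_dual[OF s g2 G2] cD2 Q_def by (simp add: power_add)
  then have kh2: "k2 + h2 = n" using Q2 by simp
  have C1c: "C1 \<subseteq> carrier_vec n" and C2c: "C2 \<subseteq> carrier_vec n"
    using assms(3,4) unfolding free_code_def linear_code_def by auto
  have C10: "0\<^sub>v n \<in> C1" and C20: "0\<^sub>v n \<in> C2"
    using assms(3,4) unfolding free_code_def linear_code_def by auto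
  have C1r: "C1 = {transpose_mat G1 *\<^sub>v c | c. c \<in> carrier_vec k1}"
    using g1 G1 unfolding generator_matrix_def row_module_def by auto
  have C2r: "C2 = {transpose_mat G2 *\<^sub>v c | c. c \<in> carrier_vec k2}"
    using g2 G2 unfolding generator_matrix_def row_module_def by auto
  define G where "G = G1 @\<^sub>r G2"
  have G: "G \<in> carrier_mat (k1 + k2) n" unfolding G_def using G1 G2 by auto
  define H where "H = H1 @\<^sub>r H2"
  have H: "H \<in> carrier_mat (h1 + h2) n" unfolding H_def using H1 H2 by auto
  have surjG: "\<forall>v\<in>carrier_vec n. \<exists>c\<in>carrier_vec (k1 + k2). transpose_mat G *\<^sub>v c = v"
  proof
    fix v :: "'a vec" assume "v \<in> carrier_vec n"
    then have "v \<in> code_sum C1 C2" using assms(9) by simp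
    then obtain x y where xy: "v = x + y" "x \<in> C1" "y \<in> C2" unfolding code_sum_def by blast
    obtain a where a: "a \<in> carrier_vec k1" "x = transpose_mat G1 *\<^sub>v a" using xy(2) C1r by blast
    obtain b where b: "b \<in> carrier_vec k2" "y = transpose_mat G2 *\<^sub>v b" using xy(3) C2r by blast
    have "transpose_mat G *\<^sub>v (a @\<^sub>v b) = v" unfolding G_def tmv_append[OF G1 G2 a(1) b(1)] using xy a b by simp
    moreover have "a @\<^sub>v b \<in> carrier_vec (k1 + k2)" using a b by simp
    ultimately show "\<exists>c\<in>carrier_vec (k1 + k2). transpose_mat G *\<^sub>v c = v" by blast
  qed
  have imgG: "(\<lambda>c. transpose_mat G *\<^sub>v c) ` carrier_vec (k1 + k2) = carrier_vec n"
    using surjG G by (auto simp: image_iff)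
  have invG: "invertible_mat G \<longleftrightarrow> k1 + k2 = n"
  proof
    assume "invertible_mat G"
    then show "k1 + k2 = n" using G unfolding invertible_mat_def square_mat.simps by simp
  next
    assume P: "k1 + k2 = n"
    show "invertible_mat G" by (rule inv_from_surj[of _ n]) (use G surjG P in auto)
  qed
  have D12: "\<forall>u. u \<in> dual_code n C1 \<longrightarrow> u \<in> dual_code n C2 \<longrightarrow> u = 0\<^sub>v n"
  proof (intro allI impI)
    fix u assume u1: "u \<in> dual_code n C1" and u2: "u \<in> dual_code n C2"
    have u: "u \<in> carrier_vec n" using u1 unfolding dual_code_def by simp
    show "u = 0\<^sub>v n"
    proof (rule eq_vecI)
      fix t assume "t < dim_vec (0\<^sub>v n :: 'a vec)"
      then have t: "t < n" by simp
      have "unit_vec n t \<in> code_sum C1 C2" using assms(9) by simp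
      then obtain x y where xy: "unit_vec n t = x + y" "x \<in> C1" "y \<in> C2" unfolding code_sum_def by blast
      have "u \<bullet> x = 0" "u \<bullet> y = 0" using u1 u2 xy unfolding dual_code_def by auto
      moreover have "u \<bullet> (x + y) = u \<bullet> x + u \<bullet> y"
        by (rule scalar_prod_add_distrib[of _ n]) (use u xy C1c C2c in auto)
      ultimately have "u \<bullet> unit_vec n t = 0" using xy by simp
      then show "u $ t = 0\<^sub>v n $ t" using t by simp
    qed (use u in simp)
  qed
  have LCPi: "LCP n C1 C2 \<longleftrightarrow> k1 + k2 = n"
  proof
    assume L: "LCP n C1 C2"
    have inter: "\<forall>x. x \<in> C1 \<longrightarrow> x \<in> C2 \<longrightarrow> x = 0\<^sub>v n" using L unfolding LCP_def by blast
    have injG: "inj_on (\<lambda>c. transpose_mat G *\<^sub>v c) (carrier_vec (k1 + k2))"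
      by (rule tmv_inj_gen[OF G]) (use append_zero[OF g1 g2 G1 G2 inter] in \<open>auto simp: G_def\<close>)
    have "card (carrier_vec n :: 'a vec set) = card ((\<lambda>c. transpose_mat G *\<^sub>v c) ` carrier_vec (k1 + k2))"
      unfolding imgG ..
    also have "\<dots> = card (carrier_vec (k1 + k2) :: 'a vec set)" by (rule card_image[OF injG])
    finally have "card (carrier_vec n :: 'a vec set) = card (carrier_vec (k1 + k2) :: 'a vec set)" .
    then have "Q ^ n = Q ^ (k1 + k2)" unfolding card_carrier_vec Q_def .
    then show "k1 + k2 = n" using Q2 by simp
  next
    assume P: "k1 + k2 = n"
    have GP: "G \<in> carrier_mat n n" using G P by simp
    have inj: "inj_on (\<lambda>c. transpose_mat G *\<^sub>v c) (carrier_vec n)"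
    proof -
      have "card ((\<lambda>c. transpose_mat G *\<^sub>v c) ` carrier_vec n) = card (carrier_vec n :: 'a vec set)"
        using imgG P by simp
      then show ?thesis using inj_on_iff_eq_card[of "carrier_vec n :: 'a vec set" "\<lambda>c. transpose_mat G *\<^sub>v c"] by simp
    qed
    have "x = 0\<^sub>v n" if x1: "x \<in> C1" and x2: "x \<in> C2" for x
    proof -
      obtain a where a: "a \<in> carrier_vec k1" "x = transpose_mat G1 *\<^sub>v a" using x1 C1r by blast
      obtain b where b: "b \<in> carrier_vec k2" "x = transpose_mat G2 *\<^sub>v b" using x2 C2r by blast
      have mb: "- b \<in> carrier_vec k2" using b by simp
      have "transpose_mat G2 *\<^sub>v (- b) = - x" using mv_uminus[of b "transpose_mat G2"] b G2 by simp
      then have "transpose_mat G *\<^sub>v (a @\<^sub>v - b) = x + - x"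
        unfolding G_def tmv_append[OF G1 G2 a(1) mb] using a by simp
      also have "\<dots> = 0\<^sub>v n" using x1 C1c by auto
      also have "\<dots> = transpose_mat G *\<^sub>v 0\<^sub>v n" using GP by auto
      finally have eqz: "transpose_mat G *\<^sub>v (a @\<^sub>v - b) = transpose_mat G *\<^sub>v 0\<^sub>v n" .
      have abc: "a @\<^sub>v - b \<in> carrier_vec n" using append_carrier_vec[OF a(1) mb] P by simp
      have z: "a @\<^sub>v - b = 0\<^sub>v n" by (rule inj_onD[OF inj eqz abc zero_carrier_vec])
      have "a $ i = 0" if i: "i < k1" for i
      proof -
        have "(a @\<^sub>v - b) $ i = a $ i" using i a mb by simp
        moreover have "(a @\<^sub>v - b) $ i = 0" unfolding z using i P by simp
        ultimately show ?thesis by simp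
      qed
      then have "a = 0\<^sub>v k1" by (intro eq_vecI) (use a in auto)
      moreover have "transpose_mat G1 *\<^sub>v 0\<^sub>v k1 = 0\<^sub>v n" by (rule eq_vecI) (use G1 in auto)
      ultimately show ?thesis using a by simp
    qed
    then have "C1 \<inter> C2 = {0\<^sub>v n}" using C10 C20 by blast
    then show "LCP n C1 C2" unfolding LCP_def using assms(9) by simp
  qed
  have invH: "invertible_mat H \<longleftrightarrow> h1 + h2 = n"
  proof
    assume "invertible_mat H"
    then show "h1 + h2 = n" using H unfolding invertible_mat_def square_mat.simps by simp
  next
    assume P: "h1 + h2 = n"
    have HP: "H \<in> carrier_mat n n" using H P by simp
    have "inj_on (\<lambda>c. transpose_mat H *\<^sub>v c) (carrier_vec (h1 + h2))"
      by (rule tmv_inj_gen[OF H]) (use append_zero[OF hd1 hd2 H1 H2 D12] in \<open>auto simp: H_def\<close>)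
    then have "inj_on (\<lambda>c. transpose_mat H *\<^sub>v c) (carrier_vec n)" using P by simp
    from surj_of_inj[OF HP this] show "invertible_mat H" by (rule inv_from_surj[OF HP])
  qed
  have rowm: "card (row_module (Hb * transpose_mat Ga)) = Q ^ hb"
    if gA: "generator_matrix n Ga Ca" and Ga: "Ga \<in> carrier_mat ka n"
      and hB: "generator_matrix n Hb (dual_code n Cb)" and Hb: "Hb \<in> carrier_mat hb n"
      and gB: "generator_matrix n Gb Cb" and Gb: "Gb \<in> carrier_mat kb n"
      and Dab: "\<forall>u. u \<in> dual_code n Ca \<longrightarrow> u \<in> dual_code n Cb \<longrightarrow> u = 0\<^sub>v n"
    for Ga Hb Gb :: "'a mat" and Ca Cb :: "'a vec set" and ka kb hb :: nat
  proof -
    have DB: "dual_code n Cb = {transpose_mat Hb *\<^sub>v c | c. c \<in> carrier_vec hb}"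
      using hB Hb unfolding generator_matrix_def row_module_def by auto
    have "row_module (Hb * transpose_mat Ga) = {transpose_mat (Hb * transpose_mat Ga) *\<^sub>v c | c. c \<in> carrier_vec hb}"
      unfolding row_module_def using Hb Ga by simp
    also have "\<dots> = {Ga *\<^sub>v (transpose_mat Hb *\<^sub>v c) | c. c \<in> carrier_vec hb}"
    proof (rule Collect_cong)
      have eq: "transpose_mat (Hb * transpose_mat Ga) *\<^sub>v c = Ga *\<^sub>v (transpose_mat Hb *\<^sub>v c)"
        if c: "c \<in> carrier_vec hb" for c
      proof -
        have "transpose_mat (Hb * transpose_mat Ga) = Ga * transpose_mat Hb"
          using transpose_mult[of Hb hb n "transpose_mat Ga" ka] Hb Ga by simp
        moreover have "(Ga * transpose_mat Hb) *\<^sub>v c = Ga *\<^sub>v (transpose_mat Hb *\<^sub>v c)"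
          by (rule assoc_mult_mat_vec[of Ga ka n "transpose_mat Hb" hb]) (use Ga Hb c in auto)
        ultimately show ?thesis by simp
      qed
      fix x
      show "(\<exists>c. x = transpose_mat (Hb * transpose_mat Ga) *\<^sub>v c \<and> c \<in> carrier_vec hb) =
            (\<exists>c. x = Ga *\<^sub>v (transpose_mat Hb *\<^sub>v c) \<and> c \<in> carrier_vec hb)"
        using eq by metis
    qed
    also have "\<dots> = (\<lambda>u. Ga *\<^sub>v u) ` dual_code n Cb" unfolding DB by blast
    finally have RM: "row_module (Hb * transpose_mat Ga) = (\<lambda>u. Ga *\<^sub>v u) ` dual_code n Cb" .
    have "inj_on (\<lambda>u. Ga *\<^sub>v u) (dual_code n Cb)"
    proof (rule inj_onI)
      fix u v assume u: "u \<in> dual_code n Cb" and v: "v \<in> dual_code n Cb" and e: "Ga *\<^sub>v u = Ga *\<^sub>v v"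
      have uc: "u \<in> carrier_vec n" and vc: "v \<in> carrier_vec n" and Gbu: "Gb *\<^sub>v u = 0\<^sub>v kb" and Gbv: "Gb *\<^sub>v v = 0\<^sub>v kb"
        using u v dual_char[OF gB Gb] by auto
      have "Ga *\<^sub>v (u - v) = 0\<^sub>v ka" using mult_minus_distrib_mat_vec[OF Ga uc vc] e Ga vc by simp
      then have "u - v \<in> dual_code n Ca" using dual_char[OF gA Ga] uc vc by simp
      moreover have "Gb *\<^sub>v (u - v) = 0\<^sub>v kb" using mult_minus_distrib_mat_vec[OF Gb uc vc] Gbu Gbv by simp
      then have "u - v \<in> dual_code n Cb" using dual_char[OF gB Gb] uc vc by simp
      ultimately have "u - v = 0\<^sub>v n" using Dab by blast
      then show "u = v"
        by (intro eq_vecI) (use uc vc in \<open>auto dest: arg_cong[where f = "\<lambda>v. v $ _"]\<close>, metis carrier_vecD eq_iff_diff_eq_0 index_minus_vec(1) index_zero_vec(1))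
    qed
    then show ?thesis unfolding RM using card_image card_gen[OF hB Hb] Q_def by metis
  qed
  have D21: "\<forall>u. u \<in> dual_code n C2 \<longrightarrow> u \<in> dual_code n C1 \<longrightarrow> u = 0\<^sub>v n" using D12 by blast
  have r1: "card (row_module (H2 * transpose_mat G1)) = Q ^ h2" by (rule rowm[OF g1 G1 hd2 H2 g2 G2 D12])
  have r2: "card (row_module (H1 * transpose_mat G2)) = Q ^ h1" by (rule rowm[OF g2 G2 hd1 H1 g1 G1 D21])
  have rG1: "row_module G1 = C1" and rG2: "row_module G2 = C2" using g1 g2 unfolding generator_matrix_def by auto
  define q where "q = residue_card TYPE('a)"
  have q1: "1 < real q" using residue_card_ge2[OF assms(1)] q_def by simp
  have logeq: "log (real q) (real (Q ^ a)) = log (real q) (real (Q ^ b)) \<longleftrightarrow> a = b" for a b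
  proof
    assume "log (real q) (real (Q ^ a)) = log (real q) (real (Q ^ b))"
    moreover have "real (Q ^ a) \<in> {0<..}" "real (Q ^ b) \<in> {0<..}" using Q2 by auto
    ultimately have "real (Q ^ a) = real (Q ^ b)" using log_inj[OF q1] unfolding inj_on_def by blast
    then have "Q ^ a = Q ^ b" by (simp only: of_nat_eq_iff)
    then show "a = b" using Q2 by simp
  qed simp
  have rank: "(let q = residue_card TYPE('a) in
            Rank_q q (H2 * transpose_mat G1) = Rank_q q G1
          \<or> Rank_q q (H1 * transpose_mat G2) = Rank_q q G2) \<longleftrightarrow> k1 + k2 = n"
    unfolding Let_def q_def[symmetric] Rank_q_def r1 r2 rG1 rG2 cC1 cC2 logeq using kh1 kh2 by auto
  show ?thesis
    unfolding rank G_def[symmetric] H_def[symmetric] invG invH LCPi using kh1 kh2 by auto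
qed

end
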